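(* Let $A\subset\mathbb{R}^k$ be a nonempty convex set, $\epsilon>0$, and $f=f(A,\epsilon)=(f_1,\dots,f_k)^T$ the map defined in the context. For $x\in(A^\epsilon)^o\setminus\bar A$ let $\theta_i$ be the angle between $x-x_0$ and the $i$-th coordinate axis $e_i$, i.e. $\cos\theta_i=(x-x_0)\cdot e_i/|x-x_0|$. Then for every $i\in\{1,\dots,k\}$, $$\partial_i f_i(x)\ge\cos^2\theta_i\quad\text{for almost every }x\in(A^\epsilon)^o\setminus\bar A.$$
   Context: $|\cdot|$ is the Euclidean norm; $e_1,\dots,e_k$ the standard basis; $\partial_i$ the partial derivative in the $i$-th coordinate; $B^o$ denotes the interior of a set $B$. For a set $A$ and $\epsilon>0$, $A^\epsilon=\{x\in\mathbb{R}^k: d(x,A)\le\epsilon\}$ where $d(x,A)=\inf_{y\in A}|x-y|$; $\bar A$ is the closure of $A$. For $x\in\mathbb{R}^k$ let $x_0$ denote the nearest point to $x$ in $\bar A$. The map $f=f(A,\epsilon)$ is defined by: $f(x)=0$ if $x\in\bar A$; $f(x)=x-x_0$ if $x\in A^\epsilon\setminus\bar A$; and if $x\in\mathbb{R}^k\setminus A^\epsilon$, $f(x)=x_1-x_0$ where $x_1$ is the intersection of the segment $\{x_0+t(x-x_0):t\in[0,1]\}$ with the boundary $\partial A^\epsilon$ of $A^\epsilon$. *)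

theory Defs
  imports "HOL-Analysis.Analysis"
begin

definition nbhd :: "'a::euclidean_space set \<Rightarrow> real \<Rightarrow> 'a set" where
  "nbhd A eps = {x. infdist x A \<le> eps}"

definition nearest :: "'a::euclidean_space set \<Rightarrow> 'a \<Rightarrow> 'a" where
  "nearest A x = closest_point (closure A) x"

definition fmap :: "'a::euclidean_space set \<Rightarrow> real \<Rightarrow> 'a \<Rightarrow> 'a" where
  "fmap A eps x =
     (if x \<in> closure A then 0
      else if x \<in> nbhd A eps then x - nearest A x
      else (SOME x1. x1 \<in> closed_segment (nearest A x) x \<and> x1 \<in> frontier (nbhd A eps))
             - nearest A x)"

end

theory Submission
  imports Defs
begin


definition msum :: "real measure \<Rightarrow> real measure \<Rightarrow> real measure" where
  "msum M N = measure_of UNIV (sets borel) (\<lambda>A. emeasure M A + emeasure N A)"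

lemma emeasure_msum:
  assumes M: "sets M = sets borel" and N: "sets N = sets borel" and A: "A \<in> sets borel"
  shows "emeasure (msum M N) A = emeasure M A + emeasure N A"
  unfolding msum_def
proof (rule emeasure_measure_of_sigma[OF _ _ _ A])
  show "sigma_algebra UNIV (sets borel)"
    by (metis sets.sigma_algebra_axioms space_borel)
  show "positive (sets borel) (\<lambda>A. emeasure M A + emeasure N A)"
    by (simp add: positive_def)
  show "countably_additive (sets borel) (\<lambda>A. emeasure M A + emeasure N A)"
  proof (rule countably_additiveI)
    fix A :: "nat \<Rightarrow> real set" assume A: "range A \<subseteq> sets borel" "disjoint_family A"
    have "(\<Sum>i. emeasure M (A i) + emeasure N (A i)) = (\<Sum>i. emeasure M (A i)) + (\<Sum>i. emeasure N (A i))"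
      by (rule suminf_add[symmetric]) auto
    also have "\<dots> = emeasure M (\<Union>i. A i) + emeasure N (\<Union>i. A i)"
      using A M N by (simp add: suminf_emeasure)
    finally show "(\<Sum>i. emeasure M (A i) + emeasure N (A i)) = emeasure M (\<Union>i. A i) + emeasure N (\<Union>i. A i)" .
  qed
qed

lemma sets_msum[simp]: "sets (msum M N) = sets borel"
  unfolding msum_def by (metis sets.sets_measure_of_eq space_borel)

lemma emeasure_interval_measure_Ioo:
  fixes g :: "real \<Rightarrow> real"
  assumes mono: "mono g" and cont: "continuous_on UNIV g" and lu: "l \<le> u"
  shows "emeasure (interval_measure g) {l<..<u} = g u - g l"
proof -
  have rc: "continuous (at_right a) g" for a
    using cont by (simp add: continuous_on_eq_continuous_at continuous_at_imp_continuous_at_within)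
  have m: "\<And>x y. x \<le> y \<Longrightarrow> g x \<le> g y" using mono by (simp add: mono_def)
  have "{l<..<u} = {l<..u} - {u}" using lu by auto
  moreover have "emeasure (interval_measure g) {u} = 0"
    using emeasure_interval_measure_Icc[of u u g] m cont by simp
  ultimately show ?thesis
    using emeasure_interval_measure_Ioc[of l u g] m rc lu
    by (simp add: emeasure_Diff_null_set null_setsI)
qed

lemma interval_measure_ac:
  fixes g :: "real \<Rightarrow> real"
  assumes mono: "mono g" and lip: "\<And>s t. s \<le> t \<Longrightarrow> g t - g s \<le> t - s"
  shows "absolutely_continuous lborel (interval_measure g)"
proof -
  have cont: "continuous_on UNIV g"
  proof (rule continuous_on_iff[THEN iffD2], intro ballI allI impI)
    fix x and e :: real assume "0 < e"
    have "dist (g y) (g x) \<le> dist y x" for y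
    proof (cases "x \<le> y")
      case True then show ?thesis using lip[of x y] mono[THEN monoD, of x y] by (simp add: dist_real_def)
    next
      case False then show ?thesis using lip[of y x] mono[THEN monoD, of y x] by (simp add: dist_real_def)
    qed
    then show "\<exists>d>0. \<forall>y\<in>UNIV. dist y x < d \<longrightarrow> dist (g y) (g x) < e"
      using \<open>0 < e\<close> by (metis le_less_trans)
  qed
  define h where "h t = t - g t" for t
  have monoh: "mono h" unfolding h_def mono_def using lip by fastforce
  have conth: "continuous_on UNIV h" unfolding h_def by (intro continuous_intros cont)
  have "lborel = msum (interval_measure g) (interval_measure h)"
  proof (rule lborel_eqI)
    fix l u :: real assume "\<And>b. b \<in> Basis \<Longrightarrow> l \<bullet> b \<le> u \<bullet> b"
    then have lu: "l \<le> u" by simp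
    show "emeasure (msum (interval_measure g) (interval_measure h)) (box l u) = (\<Prod>b\<in>Basis. (u - l) \<bullet> b)"
      using emeasure_interval_measure_Ioo[OF mono cont lu] emeasure_interval_measure_Ioo[OF monoh conth lu]
        lu mono[THEN monoD, OF lu] monoh[THEN monoD, OF lu]
      by (simp add: emeasure_msum ennreal_plus[symmetric] del: ennreal_plus) (simp add: h_def)
  qed simp
  then show ?thesis
    unfolding absolutely_continuous_def
  proof (intro subsetI)
    fix N :: "real set" assume eq: "lborel = msum (interval_measure g) (interval_measure h)" and N: "N \<in> null_sets lborel"
    then have Nb: "N \<in> sets borel" by auto
    have "emeasure (interval_measure g) N \<le> emeasure (interval_measure g) N + emeasure (interval_measure h) N"
      by simp
    also have "\<dots> = emeasure lborel N" using Nb by (simp add: eq emeasure_msum)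
    also have "\<dots> = 0" using N by auto
    finally show "N \<in> null_sets (interval_measure g)" using Nb by (auto intro: null_setsI)
  qed
qed



lemma mono_lip_density:
  fixes g :: "real \<Rightarrow> real"
  assumes mono: "mono g" and lip: "\<And>s t. s \<le> t \<Longrightarrow> g t - g s \<le> t - s"
  obtains f :: "real \<Rightarrow> real" where "\<And>x. 0 \<le> f x"
    "\<And>a b. a \<le> b \<Longrightarrow> (f has_integral (g b - g a)) {a..b}"
proof -
  have cont: "continuous_on UNIV g"
  proof (rule continuous_on_iff[THEN iffD2], intro ballI allI impI)
    fix x and e :: real assume "0 < e"
    have "dist (g y) (g x) \<le> dist y x" for y
    proof (cases "x \<le> y")
      case True then show ?thesis using lip[of x y] mono[THEN monoD, of x y] by (simp add: dist_real_def)
    next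
      case False then show ?thesis using lip[of y x] mono[THEN monoD, of y x] by (simp add: dist_real_def)
    qed
    then show "\<exists>d>0. \<forall>y\<in>UNIV. dist y x < d \<longrightarrow> dist (g y) (g x) < e"
      using \<open>0 < e\<close> by (metis le_less_trans)
  qed
  have m: "\<And>x y. x \<le> y \<Longrightarrow> g x \<le> g y" using mono by (simp add: mono_def)
  obtain \<rho> where \<rho>: "\<rho> \<in> borel_measurable lborel" "density lborel \<rho> = interval_measure g"
    using sigma_finite_measure.Radon_Nikodym[OF sigma_finite_lborel interval_measure_ac[OF mono lip]] by auto
  define f where "f x = enn2real (\<rho> x)" for x
  show ?thesis
  proof (rule that)
    show "0 \<le> f x" for x unfolding f_def by simp
    fix a b :: real assume ab: "a \<le> b"
    have "(\<integral>\<^sup>+ x. \<rho> x * indicator {a..b} x \<partial>lborel) = emeasure (density lborel \<rho>) {a..b}"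
      by (rule emeasure_density[symmetric]) (use \<rho> in auto)
    also have "\<dots> = ennreal (g b - g a)"
      using \<rho> emeasure_interval_measure_Icc[OF ab m cont] by simp
    finally have I: "(\<integral>\<^sup>+ x. \<rho> x * indicator {a..b} x \<partial>lborel) = ennreal (g b - g a)" .
    have fin: "AE x in lborel. \<rho> x * indicator {a..b} x \<noteq> \<infinity>"
      using I \<rho>(1) by (intro nn_integral_noteq_infinite) auto
    have "(\<integral>\<^sup>+ x. ennreal (f x * indicator {a..b} x) \<partial>lborel) = (\<integral>\<^sup>+ x. \<rho> x * indicator {a..b} x \<partial>lborel)"
      using fin by (intro nn_integral_cong_AE) (auto simp: f_def indicator_def less_top)
    then have "((\<lambda>x. f x * indicator {a..b} x) has_integral (g b - g a)) UNIV"
      using I \<rho>(1) m[OF ab] by (intro nn_integral_has_integral) (auto simp: f_def)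
    moreover have "(\<lambda>x. f x * indicator {a..b} x) = (\<lambda>x. if x \<in> {a..b} then f x else 0)"
      by (auto simp: indicator_def)
    ultimately have "((\<lambda>x. if x \<in> {a..b} then f x else 0) has_integral (g b - g a)) UNIV"
      by simp
    then show "(f has_integral (g b - g a)) {a..b}"
      by (rule has_integral_restrict_UNIV[THEN iffD1])
  qed
qed



lemma integral_avg_real:
  fixes f :: "real \<Rightarrow> real"
  assumes "(f has_integral I) {x..x+h}"
  shows "integral (cbox x (x + h *\<^sub>R One)) f /\<^sub>R h ^ DIM(real) = I / h"
  using assms by (simp add: integral_unique divide_inverse_commute)

lemma mono_lip_diff_ae:
  fixes g :: "real \<Rightarrow> real"
  assumes mono: "mono g" and lip: "\<And>s t. s \<le> t \<Longrightarrow> g t - g s \<le> t - s"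
  obtains N where "negligible N" "\<And>x. x \<notin> N \<Longrightarrow> \<exists>D. (g has_real_derivative D) (at x)"
proof -
  obtain f :: "real \<Rightarrow> real" where f0: "\<And>x. 0 \<le> f x"
    and fi: "\<And>a b. a \<le> b \<Longrightarrow> (f has_integral (g b - g a)) {a..b}"
    using mono_lip_density[OF mono lip] by blast
  have int1: "f integrable_on cbox a b" for a b
  proof (cases "a \<le> b")
    case True then show ?thesis using fi by (auto simp: integrable_on_def)
  next
    case False then have "cbox a b = {}" by simp
    then show ?thesis by (simp add: integrable_on_empty)
  qed
  have fi2: "((\<lambda>y. f (- y)) has_integral (g (-a) - g (-b))) {a..b}" if "a \<le> b" for a b
    using fi[of "-b" "-a"] that by (metis has_integral_reflect_real minus_minus neg_le_iff_le)
  have int2: "(\<lambda>y. f (- y)) integrable_on cbox a b" for a b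
  proof (cases "a \<le> b")
    case True then show ?thesis using fi2 by (auto simp: integrable_on_def)
  next
    case False then have "cbox a b = {}" by simp
    then show ?thesis by (simp add: integrable_on_empty)
  qed
  obtain N1 where N1: "negligible N1" and
    R: "\<And>x e. \<lbrakk>x \<notin> N1; 0 < e\<rbrakk> \<Longrightarrow> \<exists>d>0. \<forall>h. 0 < h \<and> h < d \<longrightarrow>
          norm(integral (cbox x (x + h *\<^sub>R One)) f /\<^sub>R h ^ DIM(real) - f x) < e"
    using integrable_ccontinuous_explicit[of f] int1 by metis
  obtain N2 where N2: "negligible N2" and
    L: "\<And>x e. \<lbrakk>x \<notin> N2; 0 < e\<rbrakk> \<Longrightarrow> \<exists>d>0. \<forall>h. 0 < h \<and> h < d \<longrightarrow>
          norm(integral (cbox x (x + h *\<^sub>R One)) (\<lambda>y. f (- y)) /\<^sub>R h ^ DIM(real) - f (- x)) < e"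
    using integrable_ccontinuous_explicit[of "\<lambda>y. f (- y)"] int2 by metis
  show ?thesis
  proof (rule that[of "N1 \<union> uminus ` N2"])
    have "negligible (uminus ` N2)"
      by (rule negligible_differentiable_image_negligible[OF order_refl N2])
         (auto intro!: derivative_intros simp: differentiable_on_def differentiable_def)
    then show "negligible (N1 \<union> uminus ` N2)" using N1 by simp
    fix x assume x: "x \<notin> N1 \<union> uminus ` N2"
    then have x1: "x \<notin> N1" and x2: "- x \<notin> N2" by (auto simp: image_iff)
    have "((\<lambda>y. (g y - g x) / (y - x)) \<longlongrightarrow> f x) (at x)"
      unfolding LIM_eq
    proof (intro allI impI)
      fix e :: real assume e: "0 < e"
      obtain d1 where d1: "d1 > 0" "\<And>h. 0 < h \<Longrightarrow> h < d1 \<Longrightarrow> \<bar>(g (x + h) - g x) / h - f x\<bar> < e"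
        using R[OF x1 e] integral_avg_real[OF fi[of x "x + _"]] by fastforce
      obtain d2 where d2: "d2 > 0" "\<And>h. 0 < h \<Longrightarrow> h < d2 \<Longrightarrow> \<bar>(g x - g (x - h)) / h - f x\<bar> < e"
        using L[OF x2 e] integral_avg_real[OF fi2[of "-x" "-x + _"]] by fastforce
      show "\<exists>s>0. \<forall>y. y \<noteq> x \<and> norm (y - x) < s \<longrightarrow> norm ((g y - g x) / (y - x) - f x) < e"
      proof (intro exI[of _ "min d1 d2"] conjI allI impI)
        show "0 < min d1 d2" using d1 d2 by simp
        fix y assume y: "y \<noteq> x \<and> norm (y - x) < min d1 d2"
        show "norm ((g y - g x) / (y - x) - f x) < e"
        proof (cases "x < y")
          case True then show ?thesis using d1(2)[of "y - x"] y by simp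
        next
          case False
          then have "x - y > 0" using y by simp
          moreover have "(g y - g x) / (y - x) = (g x - g (x - (x - y))) / (x - y)"
            by (simp add: divide_simps) (simp add: algebra_simps)
          ultimately show ?thesis using d2(2)[of "x - y"] y by simp
        qed
      qed
    qed
    then show "\<exists>D. (g has_real_derivative D) (at x)"
      by (auto simp: has_field_derivative_iff)
  qed
qed



definition dq :: "(real \<Rightarrow> real) \<Rightarrow> real \<Rightarrow> real" where
  "dq h s = (h s - h 0) / s"

definition dcond :: "(real \<Rightarrow> real) \<Rightarrow> bool" where
  "dcond h \<longleftrightarrow> (\<forall>n::nat. \<exists>m::nat. \<forall>s::rat. \<forall>t::rat.
      (of_rat s \<noteq> (0::real) \<and> \<bar>of_rat s\<bar> < inverse (real (Suc m)) \<and>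
       of_rat t \<noteq> (0::real) \<and> \<bar>of_rat t\<bar> < inverse (real (Suc m))) \<longrightarrow>
      \<bar>dq h (of_rat s) - dq h (of_rat t)\<bar> \<le> inverse (real (Suc n)))"

lemma dcond_if_deriv:
  assumes "(h has_real_derivative D) (at 0)"
  shows "dcond h"
  unfolding dcond_def
proof
  fix n :: nat
  have lim: "(dq h \<longlongrightarrow> D) (at 0)"
    using assms by (simp add: has_field_derivative_iff dq_def[abs_def])
  have "inverse (real (Suc n)) / 2 > 0" by simp
  then obtain d where d: "d > 0" "\<And>x. x \<noteq> 0 \<Longrightarrow> \<bar>x\<bar> < d \<Longrightarrow> \<bar>dq h x - D\<bar> < inverse (real (Suc n)) / 2"
    using lim unfolding LIM_eq by (metis real_norm_def diff_zero)
  obtain m where m: "inverse (real (Suc m)) < d" using d(1) reals_Archimedean by blast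
  show "\<exists>m::nat. \<forall>s::rat. \<forall>t::rat.
      (of_rat s \<noteq> (0::real) \<and> \<bar>of_rat s\<bar> < inverse (real (Suc m)) \<and>
       of_rat t \<noteq> (0::real) \<and> \<bar>of_rat t\<bar> < inverse (real (Suc m))) \<longrightarrow>
      \<bar>dq h (of_rat s) - dq h (of_rat t)\<bar> \<le> inverse (real (Suc n))"
  proof (intro exI[of _ m] allI impI)
    fix s t :: rat
    assume st: "of_rat s \<noteq> (0::real) \<and> \<bar>of_rat s\<bar> < inverse (real (Suc m)) \<and>
       of_rat t \<noteq> (0::real) \<and> \<bar>of_rat t\<bar> < inverse (real (Suc m))"
    have "\<bar>dq h (of_rat s) - D\<bar> < inverse (real (Suc n)) / 2"
      using st m by (intro d(2)) auto
    moreover have "\<bar>dq h (of_rat t) - D\<bar> < inverse (real (Suc n)) / 2"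
      using st m by (intro d(2)) auto
    ultimately show "\<bar>dq h (of_rat s) - dq h (of_rat t)\<bar> \<le> inverse (real (Suc n))"
      by linarith
  qed
qed

lemma rat_ext_le:
  fixes \<phi> :: "real \<Rightarrow> real"
  assumes U: "open U" and c: "continuous_on U \<phi>" and le: "\<And>x. x \<in> U \<Longrightarrow> x \<in> \<rat> \<Longrightarrow> \<phi> x \<le> e"
    and x: "x \<in> U"
  shows "\<phi> x \<le> e"
proof -
  have "x \<in> closure (U \<inter> \<rat>)"
    using open_Int_closure_subset[OF U, of \<rat>] x by (auto simp: Rats_closure_real)
  then obtain \<sigma> where \<sigma>: "\<And>k. \<sigma> k \<in> U \<inter> \<rat>" "\<sigma> \<longlonglongrightarrow> x"
    unfolding closure_sequential by blast
  have "(\<lambda>k. \<phi> (\<sigma> k)) \<longlonglongrightarrow> \<phi> x"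
    using \<sigma> x by (intro continuous_on_tendsto_compose[OF c]) auto
  then show ?thesis
    by (rule tendsto_upperbound) (use \<sigma> le in auto)
qed

lemma cont_dq: "continuous_on UNIV h \<Longrightarrow> continuous_on {s. s \<noteq> 0} (dq h)"
  unfolding dq_def
  by (intro continuous_intros) (auto intro: continuous_on_subset)

lemma deriv_if_dcond:
  assumes h: "continuous_on UNIV h" and dc: "dcond h"
  shows "\<exists>D. (h has_real_derivative D) (at 0)"
proof -
  define U where "U m = {s::real. s \<noteq> 0 \<and> \<bar>s\<bar> < inverse (real (Suc m))}" for m
  have Uo: "open (U m)" for m
  proof -
    have "U m = {s. s \<noteq> 0} \<inter> {s. \<bar>s\<bar> < inverse (real (Suc m))}" by (auto simp: U_def)
    also have "open \<dots>"
      by (intro open_Int open_Collect_neq open_Collect_less continuous_intros)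
    finally show ?thesis .
  qed
  have cq: "continuous_on (U m) (dq h)" for m
    by (rule continuous_on_subset[OF cont_dq[OF h]]) (auto simp: U_def)
  have R: "\<exists>m. \<forall>s\<in>U m. \<forall>t\<in>U m. \<bar>dq h s - dq h t\<bar> \<le> inverse (real (Suc n))" for n
  proof -
    obtain m where m: "\<And>s t::rat. (of_rat s \<noteq> (0::real) \<and> \<bar>of_rat s\<bar> < inverse (real (Suc m)) \<and>
       of_rat t \<noteq> (0::real) \<and> \<bar>of_rat t\<bar> < inverse (real (Suc m))) \<Longrightarrow>
      \<bar>dq h (of_rat s) - dq h (of_rat t)\<bar> \<le> inverse (real (Suc n))"
      using dc unfolding dcond_def by blast
    have Q: "\<bar>dq h s - dq h t\<bar> \<le> inverse (real (Suc n))" if "s \<in> U m" "t \<in> U m" "s \<in> \<rat>" "t \<in> \<rat>" for s t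
      using that m by (auto simp: U_def elim!: Rats_cases)
    have Q2: "\<bar>dq h s - dq h t\<bar> \<le> inverse (real (Suc n))" if "s \<in> U m" "t \<in> U m" "t \<in> \<rat>" for s t
      by (rule rat_ext_le[OF Uo _ _ that(1), where \<phi>="\<lambda>s. \<bar>dq h s - dq h t\<bar>"])
         (use Q that in \<open>auto intro!: continuous_intros cq\<close>)
    have "\<bar>dq h s - dq h t\<bar> \<le> inverse (real (Suc n))" if "s \<in> U m" "t \<in> U m" for s t
      by (rule rat_ext_le[OF Uo _ _ that(2), where \<phi>="\<lambda>t. \<bar>dq h s - dq h t\<bar>"])
         (use Q2 that in \<open>auto intro!: continuous_intros cq\<close>)
    then show ?thesis by blast
  qed
  define X where "X k = dq h (inverse (real (Suc k)))" for k
  have inU: "inverse (real (Suc k)) \<in> U m" if "m < k" for k m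
    using that by (auto simp: U_def field_simps)
  have "Cauchy X"
  proof (rule metric_CauchyI)
    fix e :: real assume "e > 0"
    then obtain n where n: "inverse (real (Suc n)) < e" using reals_Archimedean by blast
    obtain m where m: "\<forall>s\<in>U m. \<forall>t\<in>U m. \<bar>dq h s - dq h t\<bar> \<le> inverse (real (Suc n))"
      using R by blast
    show "\<exists>M. \<forall>p\<ge>M. \<forall>q\<ge>M. dist (X p) (X q) < e"
    proof (intro exI[of _ "Suc m"] allI impI)
      fix p q assume "p \<ge> Suc m" "q \<ge> Suc m"
      then have "inverse (real (Suc p)) \<in> U m" "inverse (real (Suc q)) \<in> U m"
        using inU by auto
      then have "\<bar>X p - X q\<bar> \<le> inverse (real (Suc n))" using m by (simp add: X_def)
      then show "dist (X p) (X q) < e" using n by (simp add: dist_real_def)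
    qed
  qed
  then obtain D where D: "X \<longlonglongrightarrow> D" by (auto simp: Cauchy_convergent_iff convergent_def)
  have "(dq h \<longlongrightarrow> D) (at 0)"
    unfolding LIM_eq
  proof (intro allI impI)
    fix r :: real assume "r > 0"
    then obtain n where n: "inverse (real (Suc n)) < r" using reals_Archimedean by blast
    obtain m where m: "\<forall>s\<in>U m. \<forall>t\<in>U m. \<bar>dq h s - dq h t\<bar> \<le> inverse (real (Suc n))"
      using R by blast
    have "\<bar>dq h s - D\<bar> \<le> inverse (real (Suc n))" if "s \<in> U m" for s
    proof -
      have "(\<lambda>k. \<bar>dq h s - X k\<bar>) \<longlonglongrightarrow> \<bar>dq h s - D\<bar>"
        by (intro tendsto_intros D)
      then show ?thesis
        by (rule tendsto_upperbound)
           (use m that inU in \<open>auto simp: X_def eventually_sequentially intro!: exI[of _ "Suc m"] simp del: of_nat_Suc\<close>)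
    qed
    then show "\<exists>s>0. \<forall>x. x \<noteq> 0 \<and> norm (x - 0) < s \<longrightarrow> norm (dq h x - D) < r"
      using n by (intro exI[of _ "inverse (real (Suc m))"]) (force simp: U_def)
  qed
  then show ?thesis
    by (auto simp: has_field_derivative_iff dq_def[abs_def])
qed



lemma line_null:
  fixes E :: "'a::euclidean_space set" and i :: 'a
  assumes i: "i \<in> Basis" and E: "E \<in> sets borel"
    and sec: "\<And>x. {s::real. x + s *\<^sub>R i \<in> E} \<in> null_sets lborel"
  shows "E \<in> null_sets lborel"
proof -
  interpret P: product_sigma_finite "\<lambda>_::'a. (lborel :: real measure)"
    by standard
  define T where "T = (\<lambda>f::'a \<Rightarrow> real. \<Sum>b\<in>Basis. f b *\<^sub>R b)"
  have Tm: "T \<in> measurable (\<Pi>\<^sub>M b\<in>Basis. (lborel::real measure)) borel"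
    unfolding T_def by measurable
  have B: "Basis = insert i (Basis - {i})" using i by auto
  have "emeasure lborel E = (\<integral>\<^sup>+ y. indicator E y \<partial>(lborel::'a measure))"
    using E by simp
  also have "\<dots> = (\<integral>\<^sup>+ f. indicator E (T f) \<partial>(\<Pi>\<^sub>M b\<in>Basis. (lborel::real measure)))"
    unfolding lborel_eq[where 'a='a] T_def[symmetric]
    using E by (intro nn_integral_distr Tm) simp
  also have "\<dots> = (\<integral>\<^sup>+ x. (\<integral>\<^sup>+ y. indicator E (T (x(i := y))) \<partial>lborel) \<partial>(\<Pi>\<^sub>M b\<in>Basis-{i}. (lborel::real measure)))"
    apply (subst B)
    apply (rule P.product_nn_integral_insert)
    using E Tm B by auto
  also have "\<dots> = (\<integral>\<^sup>+ x. 0 \<partial>(\<Pi>\<^sub>M b\<in>Basis-{i}. (lborel::real measure)))"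
  proof (rule nn_integral_cong)
    fix x :: "'a \<Rightarrow> real"
    define c where "c = (\<Sum>b\<in>Basis-{i}. x b *\<^sub>R b)"
    have Tx: "T (x(i := y)) = c + y *\<^sub>R i" for y
    proof -
      have "T (x(i := y)) = (x(i := y)) i *\<^sub>R i + (\<Sum>b\<in>Basis-{i}. (x(i := y)) b *\<^sub>R b)"
        unfolding T_def by (subst B) (simp add: sum.insert_remove)
      also have "(\<Sum>b\<in>Basis-{i}. (x(i := y)) b *\<^sub>R b) = c"
        unfolding c_def by (intro sum.cong) auto
      finally show ?thesis by (simp add: add.commute fun_upd_def)
    qed
    have "(\<integral>\<^sup>+ y. indicator E (T (x(i := y))) \<partial>lborel) = (\<integral>\<^sup>+ y. indicator {s::real. c + s *\<^sub>R i \<in> E} y \<partial>lborel)"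
      by (intro nn_integral_cong) (simp add: Tx indicator_def)
    also have "\<dots> = emeasure lborel {s::real. c + s *\<^sub>R i \<in> E}"
      using sec[of c] by (intro nn_integral_indicator) auto
    also have "\<dots> = 0" using sec[of c] by auto
    finally show "(\<integral>\<^sup>+ y. indicator E (T (x(i := y))) \<partial>lborel) = 0" .
  qed
  also have "\<dots> = 0" by simp
  finally show ?thesis using E by (auto intro: null_setsI)
qed



lemma proj_ineq:
  fixes C :: "'a::euclidean_space set" and i y :: 'a
  assumes cv: "convex C" and cl: "closed C" and ne: "C \<noteq> {}" and i: "i \<in> Basis" and y: "y \<notin> C"
    and der: "((\<lambda>t. closest_point C (y + t *\<^sub>R i) \<bullet> i) has_real_derivative d) (at 0)"
  shows "d \<le> 1 - (((y - closest_point C y) \<bullet> i) / norm (y - closest_point C y))\<^sup>2"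
proof -
  define p where "p = closest_point C"
  define v where "v = y - p y"
  define r where "r = norm v"
  define c where "c = (v \<bullet> i) / r"
  define n where "n = v /\<^sub>R r"
  define u where "u = i - c *\<^sub>R n"
  have pyC: "p y \<in> C" using cl ne by (simp add: p_def closest_point_in_set)
  have r0: "r > 0" using pyC y by (auto simp: r_def v_def)
  have ni: "norm i = 1" using i by simp
  have nn: "n \<bullet> n = 1" using r0 by (simp add: n_def r_def dot_square_norm power2_eq_square)
  have cn: "i \<bullet> n = c" by (simp add: n_def c_def inner_commute divide_inverse_commute)
  have c1: "\<bar>c\<bar> \<le> 1"
  proof -
    have "\<bar>v \<bullet> i\<bar> \<le> norm v * norm i" by (rule Cauchy_Schwarz_ineq2)
    then show ?thesis using r0 ni by (simp add: c_def r_def abs_div divide_le_eq_1)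
  qed
  have uu: "norm u ^ 2 = 1 - c\<^sup>2"
  proof -
    have "norm u ^ 2 = u \<bullet> u" by (simp add: dot_square_norm)
    also have "\<dots> = i \<bullet> i - 2 * c * (i \<bullet> n) + c * c * (n \<bullet> n)"
      by (simp add: u_def inner_diff_left inner_diff_right inner_commute algebra_simps)
    also have "\<dots> = 1 - c\<^sup>2" using ni nn cn by (simp add: dot_square_norm power2_eq_square)
    finally show ?thesis .
  qed
  define q where "q t = (p (y + t *\<^sub>R i) \<bullet> i - p y \<bullet> i) / t" for t
  have key: "q t \<le> t / r + norm u * sqrt (q t) \<and> 0 \<le> q t" if t: "t > 0" for t
  proof -
    define \<Delta> where "\<Delta> = p (y + t *\<^sub>R i) - p y"
    define g where "g = \<Delta> \<bullet> i"
    have qg: "q t = g / t" by (simp add: q_def g_def \<Delta>_def inner_diff_left)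
    have pC: "p (y + t *\<^sub>R i) \<in> C" using cl ne by (simp add: p_def closest_point_in_set)
    have F1: "v \<bullet> \<Delta> \<le> 0"
      using closest_point_dot[OF cv cl pC, of y] by (simp add: v_def \<Delta>_def p_def)
    have F2: "(y + t *\<^sub>R i - p (y + t *\<^sub>R i)) \<bullet> (p y - p (y + t *\<^sub>R i)) \<le> 0"
      using closest_point_dot[OF cv cl pyC, of "y + t *\<^sub>R i"] by (simp add: p_def)
    have e1: "(y + t *\<^sub>R i - p (y + t *\<^sub>R i)) = v + t *\<^sub>R i - \<Delta>" by (simp add: v_def \<Delta>_def)
    have e2: "p y - p (y + t *\<^sub>R i) = - \<Delta>" by (simp add: \<Delta>_def)
    have "(v + t *\<^sub>R i - \<Delta>) \<bullet> (- \<Delta>) \<le> 0" using F2 by (simp only: e1 e2)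
    moreover have "(v + t *\<^sub>R i - \<Delta>) \<bullet> (- \<Delta>) = - (v \<bullet> \<Delta>) - t * g + \<Delta> \<bullet> \<Delta>"
      by (simp add: inner_add_left inner_add_right inner_diff_left inner_diff_right g_def inner_commute)
    ultimately have F2': "v \<bullet> \<Delta> + t * g - \<Delta> \<bullet> \<Delta> \<ge> 0" by linarith
    have F3: "norm \<Delta> \<le> t"
      using closest_point_lipschitz[OF cv cl ne, of "y + t *\<^sub>R i" y] t ni
      by (simp add: \<Delta>_def p_def dist_norm)
    have gD: "\<bar>g\<bar> \<le> norm \<Delta>" unfolding g_def using Basis_le_norm[OF i] by (simp add: inner_commute)
    have DD: "\<Delta> \<bullet> \<Delta> = (norm \<Delta>)\<^sup>2" by (simp add: dot_square_norm)
    have g0: "t * g \<ge> (norm \<Delta>)\<^sup>2" using F1 F2' DD by linarith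
    have "g \<le> t" using gD F3 by linarith
    then have tg: "t * g \<le> t * t" using t by (simp add: mult_left_mono)
    have vD: "\<bar>v \<bullet> \<Delta>\<bar> \<le> t * t" using F1 F2' tg inner_ge_zero[of \<Delta>] by linarith
    have nD: "\<bar>n \<bullet> \<Delta>\<bar> \<le> t * t / r"
    proof -
      have "n \<bullet> \<Delta> = (v \<bullet> \<Delta>) / r" by (simp add: n_def divide_inverse_commute)
      then show ?thesis using vD r0 by (simp add: abs_div divide_right_mono)
    qed
    have gdec: "g = c * (n \<bullet> \<Delta>) + u \<bullet> \<Delta>"
      by (simp add: g_def u_def inner_diff_left inner_diff_right inner_commute)
    have h1: "u \<bullet> \<Delta> \<le> norm u * norm \<Delta>" by (rule norm_cauchy_schwarz)
    have h2: "c * (n \<bullet> \<Delta>) \<le> t * t / r"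
    proof -
      have "\<bar>c * (n \<bullet> \<Delta>)\<bar> \<le> 1 * (t * t / r)"
        unfolding abs_mult by (intro mult_mono c1 nD) auto
      then show ?thesis by simp
    qed
    have h3: "norm u * norm \<Delta> \<le> norm u * sqrt (t * g)"
    proof -
      have "norm \<Delta> \<le> sqrt (t * g)" using g0 by (simp add: real_le_rsqrt)
      then show ?thesis by (simp add: mult_left_mono)
    qed
    have A: "g \<le> t * t / r + norm u * sqrt (t * g)"
      apply (subst (1) gdec)
      apply (rule add_mono[OF h2 order.trans[OF h1 h3]])
      done
    have B: "sqrt (t * g) = t * sqrt (g / t)"
    proof -
      have "t * g = t\<^sup>2 * (g / t)" using t by (simp add: power2_eq_square)
      then have "sqrt (t * g) = sqrt (t\<^sup>2) * sqrt (g / t)" by (simp only: real_sqrt_mult)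
      then show ?thesis using t by simp
    qed
    have "g \<le> t * t / r + norm u * (t * sqrt (g / t))" using A unfolding B .
    then have "g / t \<le> (t * t / r + norm u * (t * sqrt (g / t))) / t"
      using t by (simp add: divide_right_mono)
    also have "\<dots> = t / r + norm u * sqrt (g / t)"
      using t by (simp add: add_divide_distrib)
    finally have "g / t \<le> t / r + norm u * sqrt (g / t)" .
    moreover have "0 \<le> g / t"
    proof -
      have "0 \<le> t * g" using g0 by (meson order.trans zero_le_power2)
      then have "0 \<le> g" using t by (simp add: zero_le_mult_iff)
      then show ?thesis using t by simp
    qed
    ultimately show ?thesis using qg by simp
  qed
  have lim: "(q \<longlongrightarrow> d) (at_right 0)"
  proof -
    have "((\<lambda>t. (p (y + t *\<^sub>R i) \<bullet> i - p (y + 0 *\<^sub>R i) \<bullet> i) / (t - 0)) \<longlongrightarrow> d) (at 0)"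
      using der by (simp add: has_field_derivative_iff p_def)
    then have "(q \<longlongrightarrow> d) (at 0)" by (simp add: q_def[abs_def])
    then show ?thesis by (rule filterlim_mono) (simp_all add: at_le)
  qed
  have ev: "eventually (\<lambda>t. q t \<le> t / r + norm u * sqrt (q t)) (at_right 0)"
    by (rule eventually_at_rightI[of 0 1]) (use key in auto)
  have d0: "0 \<le> d"
  proof (rule tendsto_lowerbound[OF lim])
    show "eventually (\<lambda>t. 0 \<le> q t) (at_right 0)"
      by (rule eventually_at_rightI[of 0 1]) (use key in auto)
  qed simp
  have "((\<lambda>t. t / r + norm u * sqrt (q t)) \<longlongrightarrow> 0 / r + norm u * sqrt d) (at_right 0)"
    using r0 by (intro tendsto_intros lim) auto
  then have dle: "d \<le> norm u * sqrt d"
    using tendsto_le[OF _ _ lim ev] by simp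
  have "d \<le> (norm u)\<^sup>2"
  proof (cases "d = 0")
    case True then show ?thesis by simp
  next
    case False
    then have "sqrt d > 0" using d0 by simp
    moreover have "sqrt d * sqrt d \<le> norm u * sqrt d" using dle d0 by simp
    ultimately have "sqrt d \<le> norm u"
      using mult_right_le_imp_le by blast
    then have "(sqrt d)\<^sup>2 \<le> (norm u)\<^sup>2" by (rule power_mono) (simp add: d0)
    then show ?thesis using d0 by (simp add: real_sqrt_pow2)
  qed
  then show ?thesis using uu by (simp add: c_def v_def r_def p_def)
qed



lemma closest_point_mono_dot:
  fixes S :: "'a::euclidean_space set"
  assumes "convex S" "closed S" "S \<noteq> {}"
  shows "(closest_point S y - closest_point S z) \<bullet> (y - z) \<ge> 0"
proof -
  have "inner (y - closest_point S y) (closest_point S z - closest_point S y) \<le> 0"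
    and "inner (z - closest_point S z) (closest_point S y - closest_point S z) \<le> 0"
    by (simp_all add: assms closest_point_dot closest_point_in_set)
  then show ?thesis
    using inner_ge_zero[of "closest_point S y - closest_point S z"]
    by (simp add: inner_diff_left inner_diff_right inner_commute algebra_simps)
qed

theorem lemma2p4:
  fixes A :: "'a::euclidean_space set" and eps :: real and i :: 'a
  assumes "A \<noteq> {}" and "convex A" and "eps > 0" and "i \<in> Basis"
  shows "AE x in lebesgue.
           x \<in> interior (nbhd A eps) - closure A \<longrightarrow>
           (\<exists>D. ((\<lambda>t. fmap A eps (x + t *\<^sub>R i) \<bullet> i) has_real_derivative D) (at 0) \<and>
                D \<ge> (((x - nearest A x) \<bullet> i) / norm (x - nearest A x))\<^sup>2)"
proof -
  note i = \<open>i \<in> Basis\<close>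
  define C where "C = closure A"
  have cv: "convex C" using assms by (simp add: C_def convex_closure)
  have cl: "closed C" by (simp add: C_def)
  have ne: "C \<noteq> {}" using assms by (simp add: C_def)
  define p where "p = closest_point C"
  define G where "G y = p y \<bullet> i" for y
  have near: "nearest A y = p y" for y by (simp add: nearest_def p_def C_def)
  have contp: "continuous_on UNIV p"
    unfolding p_def by (rule continuous_on_closest_point[OF cv cl ne])
  have contG: "continuous_on UNIV G"
    unfolding G_def by (intro continuous_intros contp)
  have contline: "continuous_on UNIV (\<lambda>s. G (y + s *\<^sub>R i))" for y
    by (rule continuous_on_compose2[OF contG]) (auto intro!: continuous_intros)
  have ni: "norm i = 1" using i by simp
  have monoline: "mono (\<lambda>s. G (y + s *\<^sub>R i))" for y
  proof (rule monoI)
    fix s t :: real assume st: "s \<le> t"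
    have "(p (y + t *\<^sub>R i) - p (y + s *\<^sub>R i)) \<bullet> ((y + t *\<^sub>R i) - (y + s *\<^sub>R i)) \<ge> 0"
      unfolding p_def by (rule closest_point_mono_dot[OF cv cl ne])
    moreover have e: "(y + t *\<^sub>R i) - (y + s *\<^sub>R i) = (t - s) *\<^sub>R i" by (simp add: scaleR_diff_left)
    ultimately have "(t - s) * ((p (y + t *\<^sub>R i) - p (y + s *\<^sub>R i)) \<bullet> i) \<ge> 0"
      by (simp only: inner_scaleR_right)
    then have "(p (y + t *\<^sub>R i) - p (y + s *\<^sub>R i)) \<bullet> i \<ge> 0"
      using st by (cases "s = t") (auto simp: zero_le_mult_iff)
    then show "G (y + s *\<^sub>R i) \<le> G (y + t *\<^sub>R i)"
      by (simp add: G_def inner_diff_left)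
  qed
  have lipline: "G (y + t *\<^sub>R i) - G (y + s *\<^sub>R i) \<le> t - s" if "s \<le> t" for y s t
  proof -
    have "(p (y + t *\<^sub>R i) - p (y + s *\<^sub>R i)) \<bullet> i \<le> norm (p (y + t *\<^sub>R i) - p (y + s *\<^sub>R i))"
      using Basis_le_norm[OF i, of "p (y + t *\<^sub>R i) - p (y + s *\<^sub>R i)"] by linarith
    also have "\<dots> \<le> norm ((y + t *\<^sub>R i) - (y + s *\<^sub>R i))"
      using closest_point_lipschitz[OF cv cl ne, of "y + t *\<^sub>R i" "y + s *\<^sub>R i"]
      unfolding p_def dist_norm .
    also have "(y + t *\<^sub>R i) - (y + s *\<^sub>R i) = (t - s) *\<^sub>R i" by (simp add: scaleR_diff_left)
    also have "norm ((t - s) *\<^sub>R i) = t - s" using that ni by simp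
    finally show ?thesis by (simp add: G_def inner_diff_left)
  qed
  define B where "B = {y. \<not> dcond (\<lambda>s. G (y + s *\<^sub>R i))}"
  have Gm[measurable]: "(\<lambda>y. G (y + c *\<^sub>R i)) \<in> borel_measurable borel" for c
    by (intro borel_measurable_continuous_onI continuous_on_compose2[OF contG]) (auto intro!: continuous_intros)
  have Bb: "B \<in> sets borel"
    unfolding B_def dcond_def dq_def by measurable
  have sec: "{s::real. x + s *\<^sub>R i \<in> B} \<in> null_sets lborel" for x
  proof -
    obtain N where N: "negligible N" and dN: "\<And>s. s \<notin> N \<Longrightarrow> \<exists>D. ((\<lambda>s. G (x + s *\<^sub>R i)) has_real_derivative D) (at s)"
      using mono_lip_diff_ae[OF monoline lipline] by metis
    have sub: "{s::real. x + s *\<^sub>R i \<in> B} \<subseteq> N"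
    proof
      fix s assume s: "s \<in> {s::real. x + s *\<^sub>R i \<in> B}"
      show "s \<in> N"
      proof (rule ccontr)
        assume "s \<notin> N"
        then obtain D where "((\<lambda>s. G (x + s *\<^sub>R i)) has_real_derivative D) (at (0 + s))"
          using dN by auto
        then have "((\<lambda>t. G (x + (t + s) *\<^sub>R i)) has_real_derivative D) (at 0)"
          by (subst (asm) DERIV_shift) simp
        then have "((\<lambda>t. G ((x + s *\<^sub>R i) + t *\<^sub>R i)) has_real_derivative D) (at 0)"
          by (simp add: scaleR_add_left add_ac)
        then have "dcond (\<lambda>t. G ((x + s *\<^sub>R i) + t *\<^sub>R i))" by (rule dcond_if_deriv)
        then show False using s by (simp add: B_def)
      qed
    qed
    have Sb: "{s::real. x + s *\<^sub>R i \<in> B} \<in> sets borel"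
    proof -
      have "(\<lambda>s::real. x + s *\<^sub>R i) \<in> borel_measurable borel"
        by (intro borel_measurable_continuous_onI continuous_intros)
      from measurable_sets[OF this Bb] show ?thesis by (simp add: vimage_def)
    qed
    have "N \<in> null_sets lebesgue" using N by (simp add: negligible_iff_null_sets)
    moreover have Sl: "{s::real. x + s *\<^sub>R i \<in> B} \<in> sets lebesgue"
      by (rule sets_completionI_sets) (use Sb in simp)
    ultimately have "{s::real. x + s *\<^sub>R i \<in> B} \<in> null_sets lebesgue"
      by (rule null_sets_subset[OF _ _ sub])
    moreover have "{s::real. x + s *\<^sub>R i \<in> B} \<in> sets lborel" using Sb by simp
    ultimately show ?thesis by (simp add: null_sets_completion_iff)
  qed
  have Bnull: "B \<in> null_sets lborel" by (rule line_null[OF i Bb sec])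
  have "AE y in lborel. y \<notin> B" by (rule AE_not_in[OF Bnull])
  then have "AE y in lebesgue. y \<notin> B" by (rule AE_completion)
  then show ?thesis
  proof (rule eventually_mono)
    fix y assume yB: "y \<notin> B"
    show "y \<in> interior (nbhd A eps) - closure A \<longrightarrow>
           (\<exists>D. ((\<lambda>t. fmap A eps (y + t *\<^sub>R i) \<bullet> i) has_real_derivative D) (at 0) \<and>
                D \<ge> (((y - nearest A y) \<bullet> i) / norm (y - nearest A y))\<^sup>2)"
    proof
      assume yU: "y \<in> interior (nbhd A eps) - closure A"
      define U where "U = interior (nbhd A eps) - closure A"
      have Uo: "open U" unfolding U_def by (intro open_Diff) auto
      have dc: "dcond (\<lambda>s. G (y + s *\<^sub>R i))" using yB by (simp add: B_def)
      obtain d where d: "((\<lambda>s. G (y + s *\<^sub>R i)) has_real_derivative d) (at 0)"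
        using deriv_if_dcond[OF contline dc] by blast
      have yC: "y \<notin> C" using yU by (simp add: C_def)
      have dle: "d \<le> 1 - (((y - p y) \<bullet> i) / norm (y - p y))\<^sup>2"
        using proj_ineq[OF cv cl ne i yC, of d] d by (simp add: G_def p_def)
      define S where "S = {t::real. y + t *\<^sub>R i \<in> U}"
      have So: "open S"
      proof -
        have "open ((\<lambda>t::real. y + t *\<^sub>R i) -` U)"
          by (rule continuous_open_vimage[OF Uo]) (intro continuous_intros)
        then show ?thesis by (simp add: S_def vimage_def)
      qed
      have S0: "0 \<in> S" using yU by (simp add: S_def U_def)
      have eqS: "(y \<bullet> i + t - G (y + t *\<^sub>R i)) = fmap A eps (y + t *\<^sub>R i) \<bullet> i" if "t \<in> S" for t
      proof -
        have "y + t *\<^sub>R i \<in> nbhd A eps" "y + t *\<^sub>R i \<notin> closure A"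
          using that interior_subset by (auto simp: S_def U_def)
        then have "fmap A eps (y + t *\<^sub>R i) = (y + t *\<^sub>R i) - p (y + t *\<^sub>R i)"
          by (simp add: fmap_def near)
        then show ?thesis using ni by (simp add: G_def inner_diff_left inner_add_left dot_square_norm)
      qed
      have "((\<lambda>t. y \<bullet> i + t - G (y + t *\<^sub>R i)) has_real_derivative (1 - d)) (at 0)"
        using d by (auto intro!: derivative_eq_intros)
      then have D: "((\<lambda>t. fmap A eps (y + t *\<^sub>R i) \<bullet> i) has_real_derivative (1 - d)) (at 0)"
        by (rule has_field_derivative_transform_within_open[OF _ So S0]) (rule eqS)
      show "\<exists>D. ((\<lambda>t. fmap A eps (y + t *\<^sub>R i) \<bullet> i) has_real_derivative D) (at 0) \<and>
                D \<ge> (((y - nearest A y) \<bullet> i) / norm (y - nearest A y))\<^sup>2"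
        using D dle by (intro exI[of _ "1 - d"]) (simp add: near)
    qed
  qed
qed


end
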